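(* Let $K^f$ and $K^s$ be $n_s\times n_s$ Markov chain generators. Suppose $K^f=\mathrm{diag}(K^f_1,\dots,K^f_l)$ is block diagonal, and let $K^s$ be partitioned conformally into blocks $K^s_{i,j}$, where $K^s_{i,i}=K^s_i$. Let $L$ and $\Pi$ be the matrices constructed from $K^f$ as described in the context. Then $\tilde K=LK^s\Pi$ is the generator of a Markov chain. That is, every column of $\tilde K$ sums to zero and every off-diagonal entry of $\tilde K$ is nonnegative.
   Context: A real square matrix is a Markov chain generator if all its off-diagonal entries are nonnegative and all its column sums are zero. Each block $K^f_i$ is an $m_i\times m_i$ Markov generator. It describes fast transitions among the states of the $i$-th fast component. Its directed graph has an edge $q\to p$ iff $(K^f_i)_{pq}>0$. Decompose this graph into strongly connected components, classified as follows: - absorbing: no edges leave it to another strong component; - sources: no edges enter it from another strong component, but some leave; - internal: all others. Order the states of component $i$ as follows: first the $p_i$ isolated absorbing states (absorbing strong components consisting of a single state); then the states of the $q_i$ absorbing strong components having at least two states, component by component; then states of internal strong components; then states of sources. With this ordering, $$K^f_i=\begin{pmatrix}K^{f,ab}_i&K^{f,ab,in}_i&K^{f,ab,so}_i\\0&K^{f,in}_i&K^{f,in,so}_i\\0&0&K^{f,so}_i\end{pmatrix},$$ where $K^{f,ab}_i=\mathrm{diag}(0_{p_i},K^{f,ab}_{i,1},\dots,K^{f,ab}_{i,q_i})$. Here $K^{f,ab}_{i,j}$ is the $m^{ab}_{i,j}\times m^{ab}_{i,j}$ generator restricted to the $j$-th absorbing strong component with at least two states. The blocks $K^{f,in}_i$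 and $K^{f,so}_i$ are nonsingular. Let $\pi^{ab}_{i,j}$ be the unique probability vector with $K^{f,ab}_{i,j}\pi^{ab}_{i,j}=0$. Define $$\tilde\Pi_i=\mathrm{diag}(I_{p_i},\pi^{ab}_{i,1},\dots,\pi^{ab}_{i,q_i}).$$ Let $\Pi_i$ be $\tilde\Pi_i$ augmented below by zero rows for all internal and source states, and set $\Pi=\mathrm{diag}(\Pi_1,\dots,\Pi_l)$. Define $$\tilde L_i=\mathrm{diag}(I_{p_i},\mathbf 1^T_{m^{ab}_{i,1}},\dots,\mathbf 1^T_{m^{ab}_{i,q_i}}),$$ where $\mathbf 1^T_k=[1,\dots,1]$ of length $k$. Further define $$A_i=-\tilde L_iK^{f,ab,in}_i(K^{f,in}_i)^{-1},\qquad B_i=-(\tilde L_iK^{f,ab,so}_i+A_iK^{f,in,so}_i)(K^{f,so}_i)^{-1},$$ $L_i=[\,\tilde L_i\mid A_i\mid B_i\,]$, and $L=\mathrm{diag}(L_1,\dots,L_l)$. Then $LK^f=0$ and $K^f\Pi=0$. *)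

theory Defs
  imports Complex_Main
begin

text \<open>Matrices are real functions of two natural-number indices; an n x n matrix
uses the indices in {..<n}.  Reduced (lumped) matrices are indexed by the absorbing
strong components (sets of states).\<close>

type_synonym rmat = "nat \<Rightarrow> nat \<Rightarrow> real"

definition generator_on :: "'a set \<Rightarrow> ('a \<Rightarrow> 'a \<Rightarrow> real) \<Rightarrow> bool" where
  "generator_on I K \<longleftrightarrow>
     (\<forall>p\<in>I. \<forall>q\<in>I. p \<noteq> q \<longrightarrow> 0 \<le> K p q) \<and> (\<forall>q\<in>I. (\<Sum>p\<in>I. K p q) = 0)"

definition blk_offset :: "nat list \<Rightarrow> nat \<Rightarrow> nat" where
  "blk_offset ms i = sum_list (take i ms)"

definition block :: "nat list \<Rightarrow> nat \<Rightarrow> nat set" where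
  "block ms i = {blk_offset ms i ..< blk_offset ms (Suc i)}"

definition block_diag :: "nat \<Rightarrow> nat list \<Rightarrow> rmat \<Rightarrow> bool" where
  "block_diag n ms K \<longleftrightarrow> sum_list ms = n \<and>
     (\<forall>i<length ms. \<forall>p\<in>block ms i. \<forall>q<n. q \<notin> block ms i \<longrightarrow> K p q = 0 \<and> K q p = 0)"

definition edges :: "nat \<Rightarrow> rmat \<Rightarrow> (nat \<times> nat) set" where
  "edges n K = {(q, p). q < n \<and> p < n \<and> p \<noteq> q \<and> K p q > 0}"

definition scc :: "nat \<Rightarrow> rmat \<Rightarrow> nat \<Rightarrow> nat set" where
  "scc n K p = {q. q < n \<and> (p, q) \<in> (edges n K)\<^sup>* \<and> (q, p) \<in> (edges n K)\<^sup>*}"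

definition sccs :: "nat \<Rightarrow> rmat \<Rightarrow> nat set set" where
  "sccs n K = scc n K ` {..<n}"

definition is_absorbing :: "nat \<Rightarrow> rmat \<Rightarrow> nat set \<Rightarrow> bool" where
  "is_absorbing n K C \<longleftrightarrow> (\<forall>x\<in>C. \<forall>y. (x, y) \<in> edges n K \<longrightarrow> y \<in> C)"

definition is_source :: "nat \<Rightarrow> rmat \<Rightarrow> nat set \<Rightarrow> bool" where
  "is_source n K C \<longleftrightarrow> \<not> is_absorbing n K C \<and>
     (\<forall>x\<in>C. \<forall>y. (y, x) \<in> edges n K \<longrightarrow> y \<in> C)"

text \<open>The absorbing strong components (isolated absorbing states are the singleton
ones); they index the reduced chain.\<close>
definition abs_classes :: "nat \<Rightarrow> rmat \<Rightarrow> nat set set" where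
  "abs_classes n K = {C \<in> sccs n K. is_absorbing n K C}"

definition ab_states :: "nat \<Rightarrow> rmat \<Rightarrow> nat set" where
  "ab_states n K = \<Union>(abs_classes n K)"

definition so_states :: "nat \<Rightarrow> rmat \<Rightarrow> nat set" where
  "so_states n K = {p. p < n \<and> is_source n K (scc n K p)}"

definition in_states :: "nat \<Rightarrow> rmat \<Rightarrow> nat set" where
  "in_states n K = {p. p < n \<and> \<not> is_absorbing n K (scc n K p) \<and> \<not> is_source n K (scc n K p)}"

text \<open>pi^{ab}: the unique probability vector (supported on C) in the kernel of the
generator restricted to the absorbing component C; for an isolated absorbing state it is
the unit vector (identity block).\<close>
definition stat_vec :: "rmat \<Rightarrow> nat set \<Rightarrow> nat \<Rightarrow> real" where
  "stat_vec K C = (if card C = 1 then (\<lambda>p. if p \<in> C then 1 else 0) else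
     (THE v. (\<forall>p. p \<notin> C \<longrightarrow> v p = 0) \<and> (\<forall>p\<in>C. 0 \<le> v p) \<and> sum v C = 1 \<and>
             (\<forall>p\<in>C. (\<Sum>q\<in>C. K p q * v q) = 0)))"

definition PiM :: "nat \<Rightarrow> rmat \<Rightarrow> nat \<Rightarrow> nat set \<Rightarrow> real" where
  "PiM n K p C = (if C \<in> abs_classes n K then stat_vec K C p else 0)"

definition Ltil :: "nat \<Rightarrow> rmat \<Rightarrow> nat set \<Rightarrow> nat \<Rightarrow> real" where
  "Ltil n K C p = (if C \<in> abs_classes n K \<and> p \<in> C then 1 else 0)"

text \<open>A = - Ltilde K^{ab,in} (K^{in})^{-1}, i.e. the unique A with
A K^{in} = - Ltilde K^{ab,in}.\<close>
definition Amat :: "nat \<Rightarrow> rmat \<Rightarrow> nat set \<Rightarrow> nat \<Rightarrow> real" where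
  "Amat n K = (THE A.
     (\<forall>C q. C \<notin> abs_classes n K \<or> q \<notin> in_states n K \<longrightarrow> A C q = 0) \<and>
     (\<forall>C\<in>abs_classes n K. \<forall>q\<in>in_states n K.
        (\<Sum>r\<in>in_states n K. A C r * K r q) =
          - (\<Sum>p\<in>ab_states n K. Ltil n K C p * K p q)))"

text \<open>B = -(Ltilde K^{ab,so} + A K^{in,so}) (K^{so})^{-1}, i.e. the unique B with
B K^{so} = -(Ltilde K^{ab,so} + A K^{in,so}).\<close>
definition Bmat :: "nat \<Rightarrow> rmat \<Rightarrow> nat set \<Rightarrow> nat \<Rightarrow> real" where
  "Bmat n K = (THE B.
     (\<forall>C q. C \<notin> abs_classes n K \<or> q \<notin> so_states n K \<longrightarrow> B C q = 0) \<and>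
     (\<forall>C\<in>abs_classes n K. \<forall>q\<in>so_states n K.
        (\<Sum>r\<in>so_states n K. B C r * K r q) =
          - ((\<Sum>p\<in>ab_states n K. Ltil n K C p * K p q)
             + (\<Sum>r\<in>in_states n K. Amat n K C r * K r q))))"

definition LM :: "nat \<Rightarrow> rmat \<Rightarrow> nat set \<Rightarrow> nat \<Rightarrow> real" where
  "LM n K C p = (if p \<in> ab_states n K then Ltil n K C p
                 else if p \<in> in_states n K then Amat n K C p
                 else if p \<in> so_states n K then Bmat n K C p else 0)"

definition Ktilde :: "nat \<Rightarrow> rmat \<Rightarrow> rmat \<Rightarrow> nat set \<Rightarrow> nat set \<Rightarrow> real" where
  "Ktilde n Kf Ks C D = (\<Sum>p<n. \<Sum>q<n. LM n Kf C p * Ks p q * PiM n Kf q D)"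

end

theory Submission
  imports Defs "Jordan_Normal_Form.Determinant"
begin


lemma idx_bij: "finite S \<Longrightarrow> bij_betw ((!) (sorted_list_of_set S)) {..<card S} S"
  by (rule bij_betw_nth) auto

lemma sum_idx: assumes "finite S"
  shows "(\<Sum>q\<in>S. g q) = (\<Sum>j<card S. g (sorted_list_of_set S ! j))"
  using sum.reindex_bij_betw[OF idx_bij[OF assms], of g] by simp

lemma mat_vec_idx:
  assumes "i < k" "v \<in> carrier_vec k"
  shows "(mat k k F *\<^sub>v v) $ i = (\<Sum>j<k. F (i,j) * v $ j)"
  using assms by (auto simp: scalar_prod_def row_def lessThan_atLeast0 intro!: sum.cong)

lemma row_solve:
  fixes M :: "nat \<Rightarrow> nat \<Rightarrow> real"
  assumes fin: "finite S"
    and inj: "\<And>x. \<forall>q\<in>S. (\<Sum>r\<in>S. x r * M r q) = 0 \<Longrightarrow> \<forall>r\<in>S. x r = 0"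
  shows "\<exists>x. \<forall>q\<in>S. (\<Sum>r\<in>S. x r * M r q) = c q"
proof -
  define k where "k = card S"
  define f where "f = (!) (sorted_list_of_set S)"
  define g where "g = the_inv_into {..<k} f"
  have bij: "bij_betw f {..<k} S" using idx_bij[OF fin] unfolding f_def k_def .
  have fg: "\<And>r. r \<in> S \<Longrightarrow> f (g r) = r" "\<And>r. r \<in> S \<Longrightarrow> g r < k"
    using bij unfolding g_def
    by (auto intro: f_the_inv_into_f_bij_betw simp: bij_betw_def the_inv_into_f_f)
  have gf: "\<And>j. j < k \<Longrightarrow> g (f j) = j" using bij unfolding g_def
    by (auto intro: the_inv_into_f_f simp: bij_betw_def)
  have fS: "\<And>j. j < k \<Longrightarrow> f j \<in> S" using bij by (auto simp: bij_betw_def)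
  have sumS: "\<And>h. (\<Sum>r\<in>S. h r) = (\<Sum>j<k. h (f j))"
    using sum_idx[OF fin] unfolding f_def k_def by blast
  define T where "T = mat k k (\<lambda>(i,j). M (f j) (f i))"
  have T: "T \<in> carrier_mat k k" unfolding T_def by auto
  have Tv: "\<And>v i. i < k \<Longrightarrow> v \<in> carrier_vec k \<Longrightarrow> (T *\<^sub>v v) $ i = (\<Sum>j<k. v $ j * M (f j) (f i))"
    unfolding T_def by (subst mat_vec_idx) (auto simp: mult.commute)
  have "det T \<noteq> 0"
  proof
    assume "det T = 0"
    then obtain v where v: "v \<in> carrier_vec k" "v \<noteq> 0\<^sub>v k" "T *\<^sub>v v = 0\<^sub>v k"
      using det_0_iff_vec_prod_zero[OF T] by auto
    define x where "x r = v $ g r" for r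
    have "\<forall>q\<in>S. (\<Sum>r\<in>S. x r * M r q) = 0"
    proof
      fix q assume q: "q \<in> S"
      have "(\<Sum>r\<in>S. x r * M r q) = (\<Sum>j<k. v $ j * M (f j) (f (g q)))"
        unfolding sumS x_def using gf fg(1)[OF q] by simp
      also have "\<dots> = (T *\<^sub>v v) $ g q" using Tv[OF fg(2)[OF q] v(1)] by simp
      also have "\<dots> = 0" using v(3) fg(2)[OF q] by simp
      finally show "(\<Sum>r\<in>S. x r * M r q) = 0" .
    qed
    from inj[OF this] have "\<And>j. j < k \<Longrightarrow> v $ j = 0"
      using fS gf unfolding x_def by metis
    hence "v = 0\<^sub>v k" using v(1) by (intro eq_vecI) auto
    with v(2) show False by simp
  qed
  from det_non_zero_imp_unit[OF T this, of "()"]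
  obtain B where B: "B \<in> carrier_mat k k" "T * B = 1\<^sub>m k"
    unfolding Units_def ring_mat_def by auto
  define cv where "cv = vec k (\<lambda>i. c (f i))"
  define y where "y = B *\<^sub>v cv"
  have y: "y \<in> carrier_vec k" using B unfolding y_def cv_def by auto
  have Ty: "T *\<^sub>v y = cv" unfolding y_def
    using assoc_mult_mat_vec[OF T B(1), of cv] B(2) by (simp add: cv_def)
  show ?thesis
  proof (intro exI ballI)
    fix q assume q: "q \<in> S"
    have "(\<Sum>r\<in>S. y $ g r * M r q) = (\<Sum>j<k. y $ j * M (f j) (f (g q)))"
      unfolding sumS using gf fg(1)[OF q] by simp
    also have "\<dots> = (T *\<^sub>v y) $ g q" using Tv[OF fg(2)[OF q] y] by simp
    also have "\<dots> = c q" using Ty fg[OF q] by (simp add: cv_def)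
    finally show "(\<Sum>r\<in>S. y $ g r * M r q) = c q" .
  qed
qed

lemma col_kernel:
  fixes M :: "nat \<Rightarrow> nat \<Rightarrow> real"
  assumes fin: "finite S" and ne: "S \<noteq> {}"
    and cs: "\<forall>q\<in>S. (\<Sum>p\<in>S. M p q) = 0"
  shows "\<exists>v. (\<exists>p\<in>S. v p \<noteq> 0) \<and> (\<forall>p\<in>S. (\<Sum>q\<in>S. M p q * v q) = 0)"
proof -
  define k where "k = card S"
  define f where "f = (!) (sorted_list_of_set S)"
  define g where "g = the_inv_into {..<k} f"
  have bij: "bij_betw f {..<k} S" using idx_bij[OF fin] unfolding f_def k_def .
  have fg: "\<And>r. r \<in> S \<Longrightarrow> f (g r) = r" "\<And>r. r \<in> S \<Longrightarrow> g r < k"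
    using bij unfolding g_def
    by (auto intro: f_the_inv_into_f_bij_betw simp: bij_betw_def the_inv_into_f_f)
  have gf: "\<And>j. j < k \<Longrightarrow> g (f j) = j" using bij unfolding g_def
    by (auto intro: the_inv_into_f_f simp: bij_betw_def)
  have fS: "\<And>j. j < k \<Longrightarrow> f j \<in> S" using bij by (auto simp: bij_betw_def)
  have sumS: "\<And>h. (\<Sum>r\<in>S. h r) = (\<Sum>j<k. h (f j))"
    using sum_idx[OF fin] unfolding f_def k_def by blast
  have k0: "k > 0" using fin ne unfolding k_def by (simp add: card_gt_0_iff)
  define N where "N = mat k k (\<lambda>(i,j). M (f i) (f j))"
  have N: "N \<in> carrier_mat k k" unfolding N_def by auto
  have NT: "transpose_mat N \<in> carrier_mat k k" using N by auto
  have "transpose_mat N *\<^sub>v vec k (\<lambda>_. 1) = 0\<^sub>v k"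
  proof (rule eq_vecI)
    fix i assume i: "i < dim_vec (0\<^sub>v k :: real vec)"
    hence i: "i < k" by simp
    have "(transpose_mat N *\<^sub>v vec k (\<lambda>_. 1)) $ i = (\<Sum>j<k. M (f j) (f i))"
    proof -
      have "transpose_mat N = mat k k (\<lambda>(i,j). M (f j) (f i))"
        by (rule eq_matI) (auto simp: N_def)
      thus ?thesis using i mat_vec_idx[of i k "vec k (\<lambda>_. 1)" "\<lambda>(i,j). M (f j) (f i)"]
        by simp
    qed
    also have "\<dots> = (\<Sum>p\<in>S. M p (f i))" using sumS[of "\<lambda>p. M p (f i)"] by simp
    also have "\<dots> = 0" using cs fS[OF i] by simp
    finally show "(transpose_mat N *\<^sub>v vec k (\<lambda>_. 1)) $ i = 0\<^sub>v k $ i" using i by simp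
  qed (simp add: N_def)
  moreover have "vec k (\<lambda>_. 1) \<noteq> (0\<^sub>v k :: real vec)"
  proof
    assume "vec k (\<lambda>_. 1) = (0\<^sub>v k :: real vec)"
    hence "vec k (\<lambda>_. 1::real) $ 0 = 0\<^sub>v k $ 0" by simp
    with k0 show False by simp
  qed
  ultimately have "det (transpose_mat N) = 0"
    using det_0_iff_vec_prod_zero[OF NT] by (metis vec_carrier)
  hence "det N = 0" using det_transpose[OF N] by simp
  then obtain v where v: "v \<in> carrier_vec k" "v \<noteq> 0\<^sub>v k" "N *\<^sub>v v = 0\<^sub>v k"
    using det_0_iff_vec_prod_zero[OF N] by auto
  obtain j where j: "j < k" "v $ j \<noteq> 0"
    using v(1,2) by (metis carrier_vecD eq_vecI index_zero_vec(1) index_zero_vec(2))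
  show ?thesis
  proof (rule exI[of _ "\<lambda>q. v $ g q"], intro conjI ballI)
    show "\<exists>p\<in>S. v $ g p \<noteq> 0" using j gf fS by metis
  next
    fix p assume p: "p \<in> S"
    have "(\<Sum>q\<in>S. M p q * v $ g q) = (\<Sum>j<k. M (f (g p)) (f j) * v $ j)"
      unfolding sumS using gf fg(1)[OF p] by simp
    also have "\<dots> = (N *\<^sub>v v) $ g p" unfolding N_def
      using fg(2)[OF p] v(1) by (subst mat_vec_idx) auto
    also have "\<dots> = 0" using v(3) fg(2)[OF p] by simp
    finally show "(\<Sum>q\<in>S. M p q * v $ g q) = 0" .
  qed
qed




locale gen =
  fixes n :: nat and K :: rmat
  assumes gen: "generator_on {..<n} K"
begin

abbreviation "E \<equiv> edges n K"

lemma offd: "p < n \<Longrightarrow> q < n \<Longrightarrow> p \<noteq> q \<Longrightarrow> 0 \<le> K p q"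
  using gen unfolding generator_on_def by auto

lemma colsum: "q < n \<Longrightarrow> (\<Sum>p<n. K p q) = 0"
  using gen unfolding generator_on_def by auto

lemma edge_lt: "(x,y) \<in> E \<Longrightarrow> x < n \<and> y < n"
  unfolding edges_def by auto

lemma edge_iff: "(x,y) \<in> E \<longleftrightarrow> x < n \<and> y < n \<and> y \<noteq> x \<and> K y x > 0"
  unfolding edges_def by auto

lemma rt_lt: "(x,y) \<in> E\<^sup>* \<Longrightarrow> x < n \<Longrightarrow> y < n"
  by (induction rule: rtrancl_induct) (auto dest: edge_lt)

lemma scc_self: "p < n \<Longrightarrow> p \<in> scc n K p"
  unfolding scc_def by auto

lemma scc_sub: "scc n K p \<subseteq> {..<n}"
  unfolding scc_def by auto

lemma scc_eq: "q \<in> scc n K p \<Longrightarrow> scc n K q = scc n K p"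
  unfolding scc_def by (auto intro: rtrancl_trans)

lemma scc_path: "q \<in> scc n K p \<Longrightarrow> r \<in> scc n K p \<Longrightarrow> (q,r) \<in> E\<^sup>*"
  unfolding scc_def by (auto intro: rtrancl_trans)

lemma reach_abs:
  assumes p: "p < n"
  shows "\<exists>x. (p,x) \<in> E\<^sup>* \<and> is_absorbing n K (scc n K x)"
proof -
  define R where "R x = {y. (x,y) \<in> E\<^sup>*}" for x
  have finR: "x < n \<Longrightarrow> finite (R x)" for x
    by (rule finite_subset[of _ "{..<n}"]) (auto simp: R_def dest: rt_lt)
  obtain x where x: "(p,x) \<in> E\<^sup>*" and xm: "\<forall>y. (p,y) \<in> E\<^sup>* \<longrightarrow> card (R x) \<le> card (R y)"
    using ex_has_least_nat[of "\<lambda>x. (p,x) \<in> E\<^sup>*" p "\<lambda>x. card (R x)"] by auto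
  have xn: "x < n" using rt_lt[OF x p] .
  have "is_absorbing n K (scc n K x)"
    unfolding is_absorbing_def
  proof (intro ballI allI impI)
    fix x' y assume x': "x' \<in> scc n K x" and e: "(x',y) \<in> E"
    have xx': "(x,x') \<in> E\<^sup>*" using x' unfolding scc_def by auto
    have xy: "(x,y) \<in> E\<^sup>*" using xx' e by auto
    have yn: "y < n" using edge_lt[OF e] by simp
    have sub: "R y \<subseteq> R x" using xy unfolding R_def by (auto intro: rtrancl_trans)
    have "card (R x) \<le> card (R y)" using xm x xy by (meson rtrancl_trans)
    hence "R y = R x" using sub finR[OF xn] by (meson card_seteq)
    hence "(y,x) \<in> E\<^sup>*" unfolding R_def by auto
    thus "y \<in> scc n K x" unfolding scc_def using xy yn by auto
  qed
  with x show ?thesis by blast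
qed

lemma ab_iff: "p \<in> ab_states n K \<longleftrightarrow> p < n \<and> is_absorbing n K (scc n K p)"
  unfolding ab_states_def abs_classes_def sccs_def
  by (auto dest: scc_eq simp: scc_self) (use scc_sub in blast)

lemma absD: "C \<in> abs_classes n K \<Longrightarrow> \<exists>c<n. C = scc n K c \<and> is_absorbing n K C"
  unfolding abs_classes_def sccs_def by auto

lemma abs_mem: "C \<in> abs_classes n K \<Longrightarrow> p \<in> C \<Longrightarrow> C = scc n K p"
  using absD scc_eq by metis

lemma abs_sub: "C \<in> abs_classes n K \<Longrightarrow> C \<subseteq> {..<n}"
  using absD scc_sub by metis

lemma fin_abs: "finite (abs_classes n K)"
  unfolding abs_classes_def sccs_def by auto

lemma ab_lt: "p \<in> ab_states n K \<Longrightarrow> p < n" using ab_iff by auto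
lemma in_lt: "p \<in> in_states n K \<Longrightarrow> p < n" unfolding in_states_def by auto
lemma so_lt: "p \<in> so_states n K \<Longrightarrow> p < n" unfolding so_states_def by auto

lemma disj: "p \<in> ab_states n K \<Longrightarrow> p \<notin> in_states n K"
  "p \<in> ab_states n K \<Longrightarrow> p \<notin> so_states n K"
  "p \<in> in_states n K \<Longrightarrow> p \<notin> so_states n K"
  unfolding in_states_def so_states_def is_source_def by (auto simp: ab_iff)

lemma cover: "p < n \<Longrightarrow> p \<in> ab_states n K \<or> p \<in> in_states n K \<or> p \<in> so_states n K"
  unfolding in_states_def so_states_def by (auto simp: ab_iff)

lemma ab_out: "q \<in> ab_states n K \<Longrightarrow> r < n \<Longrightarrow> r \<notin> scc n K q \<Longrightarrow> K r q = 0"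
proof -
  assume q: "q \<in> ab_states n K" and r: "r < n" "r \<notin> scc n K q"
  have qn: "q < n" and a: "is_absorbing n K (scc n K q)" using q ab_iff by auto
  have rq: "r \<noteq> q" using r scc_self qn by auto
  have "\<not> K r q > 0"
  proof
    assume "K r q > 0"
    hence "(q,r) \<in> E" using edge_iff qn r rq by auto
    thus False using a r scc_self[OF qn] unfolding is_absorbing_def by auto
  qed
  thus ?thesis using offd[OF r(1) qn rq] by simp
qed

lemma in_so: "q \<in> in_states n K \<Longrightarrow> r \<in> so_states n K \<Longrightarrow> K r q = 0"
proof -
  assume q: "q \<in> in_states n K" and r: "r \<in> so_states n K"
  have qn: "q < n" "r < n" using q r in_lt so_lt by auto
  have rq: "r \<noteq> q" using disj q r by auto
  have "\<not> K r q > 0"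
  proof
    assume "K r q > 0"
    hence e: "(q,r) \<in> E" using edge_iff qn rq by auto
    have "is_source n K (scc n K r)" using r unfolding so_states_def by auto
    hence "q \<in> scc n K r" using e scc_self[OF qn(2)] unfolding is_source_def by auto
    hence "scc n K q = scc n K r" by (rule scc_eq)
    thus False using q r unfolding in_states_def so_states_def by auto
  qed
  thus ?thesis using offd[OF qn(2,1) rq] by simp
qed

lemma reach_out_in: "p \<in> in_states n K \<Longrightarrow> \<exists>y. y \<notin> in_states n K \<and> (p,y) \<in> E\<^sup>*"
  using reach_abs[OF in_lt] ab_iff rt_lt in_lt disj by metis

lemma reach_out_so: "p \<in> so_states n K \<Longrightarrow> \<exists>y. y \<notin> so_states n K \<and> (p,y) \<in> E\<^sup>*"
  using reach_abs[OF so_lt] ab_iff rt_lt so_lt disj by metis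

lemma minprinc:
  assumes S: "S \<subseteq> {..<n}" and reach: "\<forall>p\<in>S. \<exists>y. y \<notin> S \<and> (p,y) \<in> E\<^sup>*"
    and b: "\<forall>q\<in>S. b q \<ge> 0" and eq: "\<forall>q\<in>S. (\<Sum>r\<in>S. x r * K r q) = - b q"
  shows "\<forall>r\<in>S. x r \<ge> 0"
proof (rule ccontr)
  assume "\<not> (\<forall>r\<in>S. x r \<ge> 0)"
  then obtain r0 where r0: "r0 \<in> S" "x r0 < 0" by force
  have finS: "finite S" using S finite_subset by blast
  define m where "m = Min (x ` S)"
  have mle: "\<And>r. r \<in> S \<Longrightarrow> m \<le> x r" unfolding m_def using finS by auto
  have mneg: "m < 0" using mle[OF r0(1)] r0 by simp
  obtain q0 where q0: "q0 \<in> S" "x q0 = m"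
  proof -
    have "m \<in> x ` S" unfolding m_def using finS r0 by (intro Min_in) auto
    thus ?thesis using that by auto
  qed
  have closed: "y \<in> S \<and> x y = m" if q: "q \<in> S" "x q = m" and e: "(q,y) \<in> E" for q y
  proof -
    have qn: "q < n" using q S by auto
    have split: "{..<n} = S \<union> ({..<n} - S)" using S by auto
    have cs: "(\<Sum>r\<in>S. K r q) + (\<Sum>r\<in>{..<n} - S. K r q) = 0"
      using colsum[OF qn] sum.union_disjoint[of S "{..<n} - S" "\<lambda>r. K r q"] finS split
      by (metis Diff_disjoint finite_Diff finite_lessThan)
    have "(\<Sum>r\<in>S. x r * K r q) = (\<Sum>r\<in>S. (x r - m) * K r q) + m * (\<Sum>r\<in>S. K r q)"
      by (simp add: algebra_simps sum.distrib sum_distrib_left sum_subtractf)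
    also have "\<dots> = (\<Sum>r\<in>S. (x r - m) * K r q) + (- m) * (\<Sum>r\<in>{..<n} - S. K r q)"
      using cs by (simp add: algebra_simps flip: distrib_left)
    finally have EQ: "(\<Sum>r\<in>S. (x r - m) * K r q) + (- m) * (\<Sum>r\<in>{..<n} - S. K r q) = - b q"
      using eq q by simp
    have T1: "\<forall>r\<in>S. 0 \<le> (x r - m) * K r q"
    proof
      fix r assume r: "r \<in> S"
      show "0 \<le> (x r - m) * K r q"
      proof (cases "r = q")
        case True thus ?thesis using q by simp
      next
        case False thus ?thesis using mle[OF r] offd[of r q] r S qn by (auto intro: mult_nonneg_nonneg)
      qed
    qed
    have T2: "\<forall>r\<in>{..<n} - S. 0 \<le> K r q" using offd qn q by auto
    have s1: "0 \<le> (\<Sum>r\<in>S. (x r - m) * K r q)" using T1 by (intro sum_nonneg) auto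
    have s2: "0 \<le> (\<Sum>r\<in>{..<n} - S. K r q)" using T2 by (intro sum_nonneg) auto
    have bq: "b q \<ge> 0" using b q by auto
    have z1: "(\<Sum>r\<in>S. (x r - m) * K r q) = 0" and z2: "(\<Sum>r\<in>{..<n} - S. K r q) = 0"
    proof -
      have "0 \<le> (- m) * (\<Sum>r\<in>{..<n} - S. K r q)" using s2 mneg by (simp add: mult_nonpos_nonneg)
      hence a: "(\<Sum>r\<in>S. (x r - m) * K r q) = 0" "(- m) * (\<Sum>r\<in>{..<n} - S. K r q) = 0"
        using EQ s1 bq by linarith+
      thus "(\<Sum>r\<in>S. (x r - m) * K r q) = 0" "(\<Sum>r\<in>{..<n} - S. K r q) = 0"
        using mneg by auto
    qed
    have yn: "y < n" "y \<noteq> q" "K y q > 0" using e edge_iff by auto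
    show ?thesis
    proof (cases "y \<in> S")
      case True
      hence "(x y - m) * K y q = 0" using z1 T1 finS sum_nonneg_eq_0_iff[of S "\<lambda>r. (x r - m) * K r q"] by simp
      thus ?thesis using True yn by simp
    next
      case False
      hence "K y q = 0" using z2 T2 sum_nonneg_eq_0_iff[of "{..<n} - S" "\<lambda>r. K r q"] yn by simp
      thus ?thesis using yn by simp
    qed
  qed
  obtain y where y: "y \<notin> S" "(q0,y) \<in> E\<^sup>*" using reach q0 by blast
  have "y \<in> S \<and> x y = m" using y(2)
  proof (induction rule: rtrancl_induct)
    case base thus ?case using q0 by simp
  next
    case (step a c) thus ?case using closed by blast
  qed
  with y show False by simp
qed

lemma uniq:
  assumes S: "S \<subseteq> {..<n}" and reach: "\<forall>p\<in>S. \<exists>y. y \<notin> S \<and> (p,y) \<in> E\<^sup>*"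
    and eq: "\<forall>q\<in>S. (\<Sum>r\<in>S. x r * K r q) = 0"
  shows "\<forall>r\<in>S. x r = 0"
proof -
  have "\<forall>r\<in>S. x r \<ge> 0" using minprinc[OF S reach, of "\<lambda>_. 0" x] eq by simp
  moreover have "\<forall>r\<in>S. - x r \<ge> 0" using minprinc[OF S reach, of "\<lambda>_. 0" "\<lambda>r. - x r"] eq
    by (simp add: sum_negf)
  ultimately show ?thesis by force
qed

end



context gen begin

abbreviation "AB \<equiv> ab_states n K"
abbreviation "IN \<equiv> in_states n K"
abbreviation "SO \<equiv> so_states n K"
abbreviation "ABS \<equiv> abs_classes n K"

definition solP :: "nat set \<Rightarrow> (nat set \<Rightarrow> nat \<Rightarrow> real) \<Rightarrow> (nat set \<Rightarrow> nat \<Rightarrow> real) \<Rightarrow> bool" where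
  "solP S c X \<longleftrightarrow> (\<forall>C q. C \<notin> ABS \<or> q \<notin> S \<longrightarrow> X C q = 0) \<and>
     (\<forall>C\<in>ABS. \<forall>q\<in>S. (\<Sum>r\<in>S. X C r * K r q) = c C q)"

lemma solve_THE:
  assumes S: "S \<subseteq> {..<n}" and reach: "\<forall>p\<in>S. \<exists>y. y \<notin> S \<and> (p,y) \<in> E\<^sup>*"
  shows "solP S c (THE X. solP S c X)"
proof (rule theI'[of "solP S c"])
  have finS: "finite S" using S finite_subset by blast
  have "\<forall>C. \<exists>x. \<forall>q\<in>S. (\<Sum>r\<in>S. x r * K r q) = c C q"
    using row_solve[OF finS] uniq[OF S reach] by blast
  then obtain X where X: "\<And>C. \<forall>q\<in>S. (\<Sum>r\<in>S. X C r * K r q) = c C q" by metis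
  define Y where "Y C q = (if C \<in> ABS \<and> q \<in> S then X C q else 0)" for C q
  have "solP S c Y" unfolding solP_def
  proof (intro conjI allI impI ballI)
    fix C q assume "C \<notin> ABS \<or> q \<notin> S" thus "Y C q = 0" unfolding Y_def by auto
  next
    fix C q assume C: "C \<in> ABS" and q: "q \<in> S"
    have "(\<Sum>r\<in>S. Y C r * K r q) = (\<Sum>r\<in>S. X C r * K r q)"
      by (rule sum.cong) (auto simp: Y_def C)
    thus "(\<Sum>r\<in>S. Y C r * K r q) = c C q" using X q by simp
  qed
  moreover have "X1 = X2" if "solP S c X1" "solP S c X2" for X1 X2
  proof (rule ext, rule ext)
    fix C q
    show "X1 C q = X2 C q"
    proof (cases "C \<in> ABS \<and> q \<in> S")
      case True
      have "\<forall>q\<in>S. (\<Sum>r\<in>S. (X1 C r - X2 C r) * K r q) = 0"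
        using that True by (simp add: solP_def algebra_simps sum_subtractf)
      from uniq[OF S reach this] True show ?thesis by simp
    next
      case False thus ?thesis using that unfolding solP_def by auto
    qed
  qed
  ultimately show "\<exists>!X. solP S c X" by blast
qed

lemma AB_sub: "AB \<subseteq> {..<n}" using ab_lt by auto
lemma IN_sub: "IN \<subseteq> {..<n}" using in_lt by auto
lemma SO_sub: "SO \<subseteq> {..<n}" using so_lt by auto

lemma sum_part: "(\<Sum>r<n. f r) = (\<Sum>r\<in>AB. f r) + (\<Sum>r\<in>IN. f r) + (\<Sum>r\<in>SO. f r)"
proof -
  have fin: "finite AB" "finite IN" "finite SO"
    using AB_sub IN_sub SO_sub finite_subset by blast+
  have eq: "{..<n} = AB \<union> IN \<union> SO" using cover AB_sub IN_sub SO_sub by blast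
  have d1: "AB \<inter> IN = {}" "(AB \<union> IN) \<inter> SO = {}" using disj by blast+
  have "sum f (AB \<union> IN \<union> SO) = sum f (AB \<union> IN) + sum f SO"
    by (rule sum.union_disjoint) (use fin d1 in auto)
  moreover have "sum f (AB \<union> IN) = sum f AB + sum f IN"
    by (rule sum.union_disjoint) (use fin d1 in auto)
  ultimately show ?thesis unfolding eq by simp
qed

lemma scc_abs: "p \<in> AB \<Longrightarrow> scc n K p \<in> ABS"
  using ab_iff unfolding abs_classes_def sccs_def by auto

lemma ltil_sum: "p \<in> AB \<Longrightarrow> (\<Sum>C\<in>ABS. Ltil n K C p) = 1"
proof -
  assume p: "p \<in> AB"
  have "(\<Sum>C\<in>ABS. Ltil n K C p) = (\<Sum>C\<in>ABS. if C = scc n K p then 1 else 0)"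
  proof (rule sum.cong[OF refl])
    fix C assume C: "C \<in> ABS"
    have pp: "p \<in> scc n K p" using scc_self ab_lt[OF p] .
    show "Ltil n K C p = (if C = scc n K p then 1 else 0)"
    proof (cases "p \<in> C")
      case True thus ?thesis using abs_mem[OF C True] C unfolding Ltil_def by simp
    next
      case False thus ?thesis using pp C unfolding Ltil_def by auto
    qed
  qed
  also have "\<dots> = 1" using scc_abs[OF p] fin_abs by simp
  finally show ?thesis .
qed

lemma ltil_nonneg: "0 \<le> Ltil n K C p" unfolding Ltil_def by simp

lemma Amat_eq: "Amat n K = (THE X. solP IN (\<lambda>C q. - (\<Sum>p\<in>AB. Ltil n K C p * K p q)) X)"
  unfolding Amat_def solP_def by simp

lemma A_sol: "solP IN (\<lambda>C q. - (\<Sum>p\<in>AB. Ltil n K C p * K p q)) (Amat n K)"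
  unfolding Amat_eq
  using solve_THE[OF IN_sub] reach_out_in by blast

lemma A_nonneg: "C \<in> ABS \<Longrightarrow> q \<in> IN \<Longrightarrow> 0 \<le> Amat n K C q"
proof -
  assume C: "C \<in> ABS" and q: "q \<in> IN"
  have "\<forall>r\<in>IN. 0 \<le> Amat n K C r"
  proof (rule minprinc[OF IN_sub, where b="\<lambda>q. \<Sum>p\<in>AB. Ltil n K C p * K p q"])
    show "\<forall>p\<in>IN. \<exists>y. y \<notin> IN \<and> (p, y) \<in> E\<^sup>*" using reach_out_in by blast
    show "\<forall>q\<in>IN. 0 \<le> (\<Sum>p\<in>AB. Ltil n K C p * K p q)"
    proof
      fix q assume q: "q \<in> IN"
      show "0 \<le> (\<Sum>p\<in>AB. Ltil n K C p * K p q)"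
      proof (intro sum_nonneg mult_nonneg_nonneg ltil_nonneg)
        fix p assume p: "p \<in> AB" show "0 \<le> K p q"
          using offd[OF ab_lt[OF p] in_lt[OF q]] disj(1)[OF p] q by auto
      qed
    qed
    show "\<forall>q\<in>IN. (\<Sum>r\<in>IN. Amat n K C r * K r q) = - (\<Sum>p\<in>AB. Ltil n K C p * K p q)"
      using A_sol C unfolding solP_def by blast
  qed
  thus ?thesis using q by blast
qed

lemma A_rowsum: "q \<in> IN \<Longrightarrow> (\<Sum>C\<in>ABS. Amat n K C q) = 1"
proof -
  assume q: "q \<in> IN"
  have "\<forall>q\<in>IN. (\<Sum>r\<in>IN. ((\<Sum>C\<in>ABS. Amat n K C r) - 1) * K r q) = 0"
  proof
    fix q assume q: "q \<in> IN"
    have "(\<Sum>r\<in>IN. ((\<Sum>C\<in>ABS. Amat n K C r) - 1) * K r q)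
        = (\<Sum>C\<in>ABS. (\<Sum>r\<in>IN. Amat n K C r * K r q)) - (\<Sum>r\<in>IN. K r q)"
      by (simp add: algebra_simps sum_subtractf sum_distrib_right sum_distrib_left mult.commute sum.swap[of _ IN ABS])
    also have "\<dots> = (\<Sum>C\<in>ABS. - (\<Sum>p\<in>AB. Ltil n K C p * K p q)) - (\<Sum>r\<in>IN. K r q)"
      using A_sol q unfolding solP_def by simp
    also have "\<dots> = - (\<Sum>p\<in>AB. (\<Sum>C\<in>ABS. Ltil n K C p) * K p q) - (\<Sum>r\<in>IN. K r q)"
      by (simp add: sum_negf sum_distrib_right sum.swap[of _ ABS AB])
    also have "\<dots> = - (\<Sum>p\<in>AB. K p q) - (\<Sum>r\<in>IN. K r q)"
      using ltil_sum by simp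
    also have "\<dots> = (\<Sum>r\<in>SO. K r q)"
      using sum_part[of "\<lambda>r. K r q"] colsum[OF in_lt[OF q]] by simp
    also have "\<dots> = 0" using in_so[OF q] by simp
    finally show "(\<Sum>r\<in>IN. ((\<Sum>C\<in>ABS. Amat n K C r) - 1) * K r q) = 0" .
  qed
  from uniq[OF IN_sub _ this] reach_out_in q show ?thesis by auto
qed

lemma Bmat_eq: "Bmat n K = (THE X. solP SO (\<lambda>C q. - ((\<Sum>p\<in>AB. Ltil n K C p * K p q)
             + (\<Sum>r\<in>IN. Amat n K C r * K r q))) X)"
  unfolding Bmat_def solP_def by simp

lemma B_sol: "solP SO (\<lambda>C q. - ((\<Sum>p\<in>AB. Ltil n K C p * K p q)
             + (\<Sum>r\<in>IN. Amat n K C r * K r q))) (Bmat n K)"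
  unfolding Bmat_eq
  using solve_THE[OF SO_sub] reach_out_so by blast

lemma B_nonneg: "C \<in> ABS \<Longrightarrow> q \<in> SO \<Longrightarrow> 0 \<le> Bmat n K C q"
proof -
  assume C: "C \<in> ABS" and q: "q \<in> SO"
  have "\<forall>r\<in>SO. 0 \<le> Bmat n K C r"
  proof (rule minprinc[OF SO_sub, where b="\<lambda>q. (\<Sum>p\<in>AB. Ltil n K C p * K p q)
             + (\<Sum>r\<in>IN. Amat n K C r * K r q)"])
    show "\<forall>p\<in>SO. \<exists>y. y \<notin> SO \<and> (p, y) \<in> E\<^sup>*" using reach_out_so by blast
    have a: "\<forall>q\<in>SO. 0 \<le> (\<Sum>p\<in>AB. Ltil n K C p * K p q)"
    proof
      fix q assume q: "q \<in> SO"
      show "0 \<le> (\<Sum>p\<in>AB. Ltil n K C p * K p q)"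
      proof (intro sum_nonneg mult_nonneg_nonneg ltil_nonneg)
        fix p assume p: "p \<in> AB" show "0 \<le> K p q"
          using offd[OF ab_lt[OF p] so_lt[OF q]] disj(2)[OF p] q by auto
      qed
    qed
    have b: "\<forall>q\<in>SO. 0 \<le> (\<Sum>r\<in>IN. Amat n K C r * K r q)"
    proof
      fix q assume q: "q \<in> SO"
      show "0 \<le> (\<Sum>r\<in>IN. Amat n K C r * K r q)"
      proof (intro sum_nonneg mult_nonneg_nonneg)
        fix p assume p: "p \<in> IN" show "0 \<le> K p q"
          using offd[OF in_lt[OF p] so_lt[OF q]] disj(3)[OF p] q by auto
        show "0 \<le> Amat n K C p" using A_nonneg[OF C p] .
      qed
    qed
    show "\<forall>q\<in>SO. 0 \<le> (\<Sum>p\<in>AB. Ltil n K C p * K p q) + (\<Sum>r\<in>IN. Amat n K C r * K r q)"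
      using a b by (simp add: add_nonneg_nonneg)
    show "\<forall>q\<in>SO. (\<Sum>r\<in>SO. Bmat n K C r * K r q) = - ((\<Sum>p\<in>AB. Ltil n K C p * K p q)
             + (\<Sum>r\<in>IN. Amat n K C r * K r q))"
      using B_sol C unfolding solP_def by blast
  qed
  thus ?thesis using q by blast
qed

lemma B_rowsum: "q \<in> SO \<Longrightarrow> (\<Sum>C\<in>ABS. Bmat n K C q) = 1"
proof -
  assume q: "q \<in> SO"
  have "\<forall>q\<in>SO. (\<Sum>r\<in>SO. ((\<Sum>C\<in>ABS. Bmat n K C r) - 1) * K r q) = 0"
  proof
    fix q assume q: "q \<in> SO"
    have "(\<Sum>r\<in>SO. ((\<Sum>C\<in>ABS. Bmat n K C r) - 1) * K r q)
        = (\<Sum>C\<in>ABS. (\<Sum>r\<in>SO. Bmat n K C r * K r q)) - (\<Sum>r\<in>SO. K r q)"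
      by (simp add: algebra_simps sum_subtractf sum_distrib_right sum_distrib_left mult.commute sum.swap[of _ SO ABS])
    also have "\<dots> = (\<Sum>C\<in>ABS. - ((\<Sum>p\<in>AB. Ltil n K C p * K p q)
             + (\<Sum>r\<in>IN. Amat n K C r * K r q))) - (\<Sum>r\<in>SO. K r q)"
      using B_sol q unfolding solP_def by simp
    also have "\<dots> = - (\<Sum>p\<in>AB. (\<Sum>C\<in>ABS. Ltil n K C p) * K p q)
          - (\<Sum>r\<in>IN. (\<Sum>C\<in>ABS. Amat n K C r) * K r q) - (\<Sum>r\<in>SO. K r q)"
      by (simp add: sum_negf sum_subtractf sum.distrib sum_distrib_right sum.swap[of _ ABS AB] sum.swap[of _ ABS IN])
    also have "\<dots> = - (\<Sum>p\<in>AB. K p q) - (\<Sum>r\<in>IN. K r q) - (\<Sum>r\<in>SO. K r q)"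
      using ltil_sum A_rowsum by simp
    also have "\<dots> = 0"
      using sum_part[of "\<lambda>r. K r q"] colsum[OF so_lt[OF q]] by simp
    finally show "(\<Sum>r\<in>SO. ((\<Sum>C\<in>ABS. Bmat n K C r) - 1) * K r q) = 0" .
  qed
  from uniq[OF SO_sub _ this] reach_out_so q show ?thesis by auto
qed

lemma LM_sum: assumes p: "p < n" shows "(\<Sum>C\<in>ABS. LM n K C p) = 1"
proof -
  consider "p \<in> AB" | "p \<in> IN" | "p \<in> SO" using cover[OF p] by blast
  thus ?thesis
  proof cases
    case 1 thus ?thesis using ltil_sum unfolding LM_def by simp
  next
    case 2
    hence "\<And>C. LM n K C p = Amat n K C p" using disj unfolding LM_def by auto
    thus ?thesis using A_rowsum 2 by simp
  next
    case 3
    hence "\<And>C. LM n K C p = Bmat n K C p" using disj unfolding LM_def by auto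
    thus ?thesis using B_rowsum 3 by simp
  qed
qed

lemma LM_nonneg: "C \<in> ABS \<Longrightarrow> 0 \<le> LM n K C p"
  unfolding LM_def by (simp add: ltil_nonneg A_nonneg B_nonneg)

end



context gen begin

lemma diag_nonpos: assumes p: "p < n" shows "K p p \<le> 0"
proof -
  have "(\<Sum>r<n. K r p) = K p p + (\<Sum>r\<in>{..<n} - {p}. K r p)"
    using p by (simp add: sum.remove)
  moreover have "0 \<le> (\<Sum>r\<in>{..<n} - {p}. K r p)"
    by (rule sum_nonneg) (use offd p in auto)
  ultimately show ?thesis using colsum[OF p] by simp
qed

lemma abs_out: assumes C: "C \<in> ABS" and q: "q \<in> C" and p: "p < n" "p \<notin> C"
  shows "K p q = 0"
proof -
  have Cq: "C = scc n K q" using abs_mem[OF C q] .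
  have "q \<in> AB" using ab_iff Cq absD[OF C] abs_sub[OF C] q by auto
  thus ?thesis using ab_out p Cq by auto
qed

lemma abs_colsum: assumes C: "C \<in> ABS" and q: "q \<in> C"
  shows "(\<Sum>p\<in>C. K p q) = 0"
proof -
  have sub: "C \<subseteq> {..<n}" using abs_sub[OF C] .
  have "(\<Sum>p<n. K p q) = (\<Sum>p\<in>C. K p q) + (\<Sum>p\<in>{..<n} - C. K p q)"
    using sub by (metis finite_lessThan sum.subset_diff add.commute)
  moreover have "(\<Sum>p\<in>{..<n} - C. K p q) = 0"
    by (rule sum.neutral) (use abs_out[OF C q] in auto)
  ultimately show ?thesis using colsum q sub by auto
qed

lemma abs_fin: "C \<in> ABS \<Longrightarrow> finite C"
  using abs_sub finite_subset by blast

lemma kernel_zero: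
  assumes C: "C \<in> ABS" and nn: "\<forall>p\<in>C. 0 \<le> (\<Sum>q\<in>C. K p q * w q)"
  shows "\<forall>p\<in>C. (\<Sum>q\<in>C. K p q * w q) = 0"
proof -
  have "(\<Sum>p\<in>C. \<Sum>q\<in>C. K p q * w q) = (\<Sum>q\<in>C. (\<Sum>p\<in>C. K p q) * w q)"
    unfolding sum_distrib_right by (rule sum.swap)
  also have "\<dots> = 0" using abs_colsum[OF C] by simp
  finally show ?thesis
    using sum_nonneg_eq_0_iff[of C "\<lambda>p. \<Sum>q\<in>C. K p q * w q"] abs_fin[OF C] nn by simp
qed

lemma zero_prop:
  assumes C: "C \<in> ABS" and nn: "\<forall>q\<in>C. 0 \<le> w q"
    and ker: "\<forall>p\<in>C. (\<Sum>q\<in>C. K p q * w q) = 0"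
    and a: "a \<in> C" "w a = 0"
  shows "\<forall>y\<in>C. w y = 0"
proof -
  have sub: "C \<subseteq> {..<n}" using abs_sub[OF C] .
  have fin: "finite C" using abs_fin[OF C] .
  have loc: "w q = 0" if p: "p \<in> C" "w p = 0" and q: "q \<in> C" "K p q > 0" for p q
  proof -
    have pq: "p \<noteq> q" using q p diag_nonpos sub by force
    have "(\<Sum>q\<in>C. K p q * w q) = K p p * w p + (\<Sum>q\<in>C - {p}. K p q * w q)"
      using p fin by (simp add: sum.remove)
    hence z: "(\<Sum>q\<in>C - {p}. K p q * w q) = 0" using ker p by simp
    have nn2: "\<forall>r\<in>C - {p}. 0 \<le> K p r * w r"
      using nn offd sub p by (auto intro!: mult_nonneg_nonneg)
    have all: "\<forall>r\<in>C - {p}. K p r * w r = 0"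
      using sum_nonneg_eq_0_iff[of "C - {p}" "\<lambda>r. K p r * w r"] z nn2 fin by simp
    have "q \<in> C - {p}" using q pq by simp
    hence "K p q * w q = 0" using all by blast
    thus ?thesis using q by simp
  qed
  have Ca: "C = scc n K a" using abs_mem[OF C a(1)] .
  show ?thesis
  proof
    fix y assume y: "y \<in> C"
    have path: "(y,a) \<in> E\<^sup>*" using scc_path y a(1) Ca by metis
    have "y \<in> C \<longrightarrow> w y = 0" using path
    proof (induction rule: converse_rtrancl_induct)
      case base thus ?case using a by simp
    next
      case (step u z)
      show ?case
      proof
        assume u: "u \<in> C"
        have "(a,u) \<in> E\<^sup>*" using u a(1) Ca scc_path by metis
        hence "(a,z) \<in> E\<^sup>*" using step(1) by auto
        moreover have "z < n" using step(1) edge_lt by auto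
        ultimately have z: "z \<in> C" using step(2) Ca unfolding scc_def by auto
        have "K z u > 0" using step(1) edge_iff by auto
        thus "w u = 0" using loc[of z u] z u step(3) by auto
      qed
    qed
    thus "w y = 0" using y by simp
  qed
qed

definition statP :: "nat set \<Rightarrow> (nat \<Rightarrow> real) \<Rightarrow> bool" where
  "statP C v \<longleftrightarrow> (\<forall>p. p \<notin> C \<longrightarrow> v p = 0) \<and> (\<forall>p\<in>C. 0 \<le> v p) \<and> sum v C = 1 \<and>
             (\<forall>p\<in>C. (\<Sum>q\<in>C. K p q * v q) = 0)"

lemma stat_ex: assumes C: "C \<in> ABS" shows "\<exists>v. statP C v"
proof -
  have sub: "C \<subseteq> {..<n}" using abs_sub[OF C] .
  have fin: "finite C" using abs_fin[OF C] .
  have ne: "C \<noteq> {}" using absD[OF C] scc_self by blast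
  obtain v where v0: "\<exists>p\<in>C. v p \<noteq> 0" and vk: "\<forall>p\<in>C. (\<Sum>q\<in>C. K p q * v q) = 0"
    using col_kernel[OF fin ne, of K] abs_colsum[OF C] by blast
  define w where "w p = (if p \<in> C then \<bar>v p\<bar> else 0)" for p
  have wnn: "\<forall>q\<in>C. 0 \<le> w q" unfolding w_def by simp
  have "\<forall>p\<in>C. 0 \<le> (\<Sum>q\<in>C. K p q * w q)"
  proof
    fix p assume p: "p \<in> C"
    have pn: "p < n" using p sub by auto
    have e1: "(\<Sum>q\<in>C. K p q * v q) = K p p * v p + (\<Sum>q\<in>C - {p}. K p q * v q)"
      using p fin by (simp add: sum.remove)
    have e2: "(\<Sum>q\<in>C. K p q * w q) = K p p * \<bar>v p\<bar> + (\<Sum>q\<in>C - {p}. K p q * \<bar>v q\<bar>)"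
      using p fin by (simp add: sum.remove w_def)
    have "\<bar>K p p * v p\<bar> = \<bar>\<Sum>q\<in>C - {p}. K p q * v q\<bar>" using e1 vk p by simp
    also have "\<dots> \<le> (\<Sum>q\<in>C - {p}. \<bar>K p q * v q\<bar>)" by (rule sum_abs)
    also have "\<dots> = (\<Sum>q\<in>C - {p}. K p q * \<bar>v q\<bar>)"
      by (rule sum.cong) (use offd sub pn in \<open>auto simp: abs_mult\<close>)
    finally have "\<bar>K p p * v p\<bar> \<le> (\<Sum>q\<in>C - {p}. K p q * \<bar>v q\<bar>)" .
    moreover have "K p p * \<bar>v p\<bar> = - \<bar>K p p * v p\<bar>" using diag_nonpos[OF pn]
      by (simp add: abs_mult)
    ultimately show "0 \<le> (\<Sum>q\<in>C. K p q * w q)" using e2 by simp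
  qed
  hence wk: "\<forall>p\<in>C. (\<Sum>q\<in>C. K p q * w q) = 0" using kernel_zero[OF C] by blast
  define s where "s = sum w C"
  have s: "s > 0"
  proof -
    obtain p where p: "p \<in> C" "v p \<noteq> 0" using v0 by blast
    have "w p \<le> s" unfolding s_def using wnn fin p by (intro member_le_sum) auto
    moreover have "w p > 0" using p unfolding w_def by simp
    ultimately show ?thesis by simp
  qed
  define u where "u p = w p / s" for p
  have "statP C u" unfolding statP_def
  proof (intro conjI allI impI ballI)
    fix p assume "p \<notin> C" thus "u p = 0" unfolding u_def w_def by simp
  next
    fix p assume "p \<in> C" thus "0 \<le> u p" unfolding u_def using wnn s by simp
  next
    show "sum u C = 1" unfolding u_def using s by (simp add: s_def flip: sum_divide_distrib)
  next
    fix p assume p: "p \<in> C"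
    have "(\<Sum>q\<in>C. K p q * u q) = (\<Sum>q\<in>C. K p q * w q) / s"
      unfolding u_def by (simp add: sum_divide_distrib)
    thus "(\<Sum>q\<in>C. K p q * u q) = 0" using wk p by simp
  qed
  thus ?thesis by blast
qed

lemma stat_uniq: assumes C: "C \<in> ABS" and v1: "statP C v1" and v2: "statP C v2"
  shows "v1 = v2"
proof (rule ccontr)
  assume neq: "v1 \<noteq> v2"
  have sub: "C \<subseteq> {..<n}" using abs_sub[OF C] .
  have fin: "finite C" using abs_fin[OF C] .
  define u where "u p = v1 p - v2 p" for p
  have ex: "\<exists>p\<in>C. u p \<noteq> 0"
  proof (rule ccontr)
    assume nz: "\<not> (\<exists>p\<in>C. u p \<noteq> 0)"
    have "v1 p = v2 p" for p
    proof (cases "p \<in> C")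
      case True thus ?thesis using nz unfolding u_def by auto
    next
      case False thus ?thesis using v1 v2 unfolding statP_def by auto
    qed
    thus False using neq by auto
  qed
  have us: "sum u C = 0" using v1 v2 unfolding statP_def u_def by (simp add: sum_subtractf)
  have uk: "\<forall>p\<in>C. (\<Sum>q\<in>C. K p q * u q) = 0"
    using v1 v2 unfolding statP_def u_def by (simp add: algebra_simps sum_subtractf)
  have "\<exists>a\<in>C. u a < 0"
  proof (rule ccontr)
    assume "\<not> ?thesis"
    hence nn: "\<forall>p\<in>C. 0 \<le> u p" by (simp add: not_less)
    have "\<forall>p\<in>C. u p = 0" using sum_nonneg_eq_0_iff[of C u] fin nn us by simp
    thus False using ex by simp
  qed
  then obtain a where a: "a \<in> C" "u a < 0" by blast
  have "\<exists>b\<in>C. u b > 0"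
  proof (rule ccontr)
    assume "\<not> ?thesis"
    hence nn: "\<forall>p\<in>C. 0 \<le> - u p" by (simp add: not_less)
    have s0: "sum (\<lambda>p. - u p) C = 0" using us by (simp add: sum_negf)
    have "\<forall>p\<in>C. - u p = 0" using sum_nonneg_eq_0_iff[of C "\<lambda>p. - u p"] fin nn s0 by simp
    thus False using ex by simp
  qed
  then obtain b where b: "b \<in> C" "u b > 0" by blast
  define w where "w p = max (u p) 0" for p
  have wnn: "\<forall>q\<in>C. 0 \<le> w q" unfolding w_def by simp
  have "\<forall>p\<in>C. 0 \<le> (\<Sum>q\<in>C. K p q * w q)"
  proof
    fix p assume p: "p \<in> C"
    have pn: "p < n" using p sub by auto
    have e1: "(\<Sum>q\<in>C. K p q * u q) = K p p * u p + (\<Sum>q\<in>C - {p}. K p q * u q)"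
      using p fin by (simp add: sum.remove)
    have e2: "(\<Sum>q\<in>C. K p q * w q) = K p p * w p + (\<Sum>q\<in>C - {p}. K p q * w q)"
      using p fin by (simp add: sum.remove)
    have le: "(\<Sum>q\<in>C - {p}. K p q * u q) \<le> (\<Sum>q\<in>C - {p}. K p q * w q)"
    proof (rule sum_mono)
      fix q assume q: "q \<in> C - {p}"
      have "0 \<le> K p q" using offd sub pn q by auto
      moreover have "u q \<le> w q" unfolding w_def by simp
      ultimately show "K p q * u q \<le> K p q * w q" by (simp add: mult_left_mono)
    qed
    have nn: "0 \<le> (\<Sum>q\<in>C - {p}. K p q * w q)"
    proof (rule sum_nonneg)
      fix q assume q: "q \<in> C - {p}"
      have "0 \<le> K p q" using offd sub pn q by auto
      moreover have "0 \<le> w q" unfolding w_def by simp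
      ultimately show "0 \<le> K p q * w q" by simp
    qed
    show "0 \<le> (\<Sum>q\<in>C. K p q * w q)"
    proof (cases "u p > 0")
      case True
      hence "w p = u p" unfolding w_def by simp
      thus ?thesis using e1 e2 le uk p by simp
    next
      case False
      hence "w p = 0" unfolding w_def by simp
      thus ?thesis using e2 nn by simp
    qed
  qed
  hence wk: "\<forall>p\<in>C. (\<Sum>q\<in>C. K p q * w q) = 0" using kernel_zero[OF C] by blast
  have "w a = 0" using a unfolding w_def by simp
  from zero_prop[OF C wnn wk a(1) this] b have "w b = 0" by blast
  thus False using b unfolding w_def by simp
qed

lemma pi_props: assumes D: "D \<in> ABS"
  shows "0 \<le> PiM n K q D" and "q \<notin> D \<Longrightarrow> PiM n K q D = 0"
proof -
  have "0 \<le> stat_vec K D q \<and> (q \<notin> D \<longrightarrow> stat_vec K D q = 0)"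
  proof (cases "card D = 1")
    case True thus ?thesis unfolding stat_vec_def by simp
  next
    case False
    have eq: "stat_vec K D = (THE v. statP D v)"
      unfolding stat_vec_def statP_def using False by simp
    have "statP D (THE v. statP D v)"
      by (rule theI'[of "statP D"]) (use stat_ex[OF D] stat_uniq[OF D] in blast)
    thus ?thesis unfolding eq statP_def by auto
  qed
  thus "0 \<le> PiM n K q D" and "q \<notin> D \<Longrightarrow> PiM n K q D = 0"
    unfolding PiM_def using D by auto
qed

end



theorem theorem2:
  fixes n :: nat and ms :: "nat list" and Kf Ks :: rmat
  assumes "generator_on {..<n} Kf"
    and "generator_on {..<n} Ks"
    and "block_diag n ms Kf"
  shows "generator_on (abs_classes n Kf) (Ktilde n Kf Ks)"
proof -
  interpret gen n Kf using assms(1) by unfold_locales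
  have Ksoff: "\<And>p q. p < n \<Longrightarrow> q < n \<Longrightarrow> p \<noteq> q \<Longrightarrow> 0 \<le> Ks p q"
    using assms(2) unfolding generator_on_def by auto
  have Kscol: "\<And>q. q < n \<Longrightarrow> (\<Sum>p<n. Ks p q) = 0"
    using assms(2) unfolding generator_on_def by auto
  show ?thesis unfolding generator_on_def
  proof (intro conjI ballI impI)
    fix C D assume C: "C \<in> abs_classes n Kf" and D: "D \<in> abs_classes n Kf" and CD: "C \<noteq> D"
    show "0 \<le> Ktilde n Kf Ks C D" unfolding Ktilde_def
    proof (intro sum_nonneg)
      fix p q assume p: "p \<in> {..<n}" and q: "q \<in> {..<n}"
      show "0 \<le> LM n Kf C p * Ks p q * PiM n Kf q D"
      proof (cases "q \<in> D")
        case qD: True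
        show ?thesis
        proof (cases "p = q")
          case True
          have qAB: "q \<in> ab_states n Kf" using ab_iff abs_mem[OF D qD] absD[OF D] q by auto
          have "q \<notin> C" using abs_mem[OF C] abs_mem[OF D qD] CD by auto
          hence "LM n Kf C p = 0" using True qAB unfolding LM_def Ltil_def by simp
          thus ?thesis by simp
        next
          case False
          thus ?thesis using LM_nonneg[OF C] Ksoff p q pi_props(1)[OF D]
            by (auto intro!: mult_nonneg_nonneg)
        qed
      next
        case False
        thus ?thesis using pi_props(2)[OF D] by simp
      qed
    qed
  next
    fix D assume D: "D \<in> abs_classes n Kf"
    have "(\<Sum>C\<in>abs_classes n Kf. Ktilde n Kf Ks C D)
        = (\<Sum>p<n. \<Sum>C\<in>abs_classes n Kf. \<Sum>q<n. LM n Kf C p * Ks p q * PiM n Kf q D)"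
      unfolding Ktilde_def by (rule sum.swap)
    also have "\<dots> = (\<Sum>p<n. \<Sum>q<n. (\<Sum>C\<in>abs_classes n Kf. LM n Kf C p) * Ks p q * PiM n Kf q D)"
      by (rule sum.cong[OF refl], subst sum.swap) (simp add: sum_distrib_right)
    also have "\<dots> = (\<Sum>p<n. \<Sum>q<n. Ks p q * PiM n Kf q D)"
      using LM_sum by simp
    also have "\<dots> = (\<Sum>q<n. (\<Sum>p<n. Ks p q) * PiM n Kf q D)"
      by (subst sum.swap) (simp add: sum_distrib_right)
    also have "\<dots> = 0" using Kscol by simp
    finally show "(\<Sum>C\<in>abs_classes n Kf. Ktilde n Kf Ks C D) = 0" .
  qed
qed


end
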